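(* Let $(E_{-1},E_0,\partial,\rho,S,\circ,\Omega)$ be an $\mathrm{LWX}$ $2$-algebroid over $M$, with $[\![\cdot,\cdot]\!]$, $J$ as below. For all $e^1\in\Gamma(E_{-1})$ and $e^0_1,e^0_2,e^0_3,e^0_4\in\Gamma(E_0)$: $$\Omega([\![e^0_1,e^0_2]\!],e^0_3,e^0_4)-\Omega([\![e^0_1,e^0_3]\!],e^0_2,e^0_4)+\Omega([\![e^0_1,e^0_4]\!],e^0_2,e^0_3)+\Omega([\![e^0_2,e^0_3]\!],e^0_1,e^0_4)-\Omega([\![e^0_2,e^0_4]\!],e^0_1,e^0_3)+\Omega([\![e^0_3,e^0_4]\!],e^0_1,e^0_2)$$ $$-[\![\Omega(e^0_1,e^0_2,e^0_3),e^0_4]\!]-[\![\Omega(e^0_1,e^0_3,e^0_4),e^0_2]\!]+[\![\Omega(e^0_1,e^0_2,e^0_4),e^0_3]\!]+[\![\Omega(e^0_2,e^0_3,e^0_4),e^0_1]\!]+\mathcal D S(\Omega(e^0_1,e^0_2,e^0_3),e^0_4)=0,$$ and $2\mathbf J+\mathbf K=-S(\Omega(\partial e^1,e^0_2,e^0_3),e^0_4)$, where $$\mathbf J=S(J(e^1,e^0_2,e^0_3),e^0_4)-S(J(e^1,e^0_2,e^0_4),e^0_3)+S(J(e^1,e^0_3,e^0_4),e^0_2)+3S(\Omega(\partial e^1,e^0_2,e^0_3),e^0_4),$$ $$\mathbf K=S([\![e^1,e^0_2]\!],[\![e^0_3,e^0_4]\!])-S([\![e^1,e^0_3]\!],[\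![e^0_2,e^0_4]\!])+S([\![e^1,e^0_4]\!],[\![e^0_2,e^0_3]\!]).$$
   Context: A Leibniz $2$-algebra $(V_{-1},V_0,d,l_2,l_3)$ consists of a complex of real vector spaces $d:V_{-1}\to V_0$, bilinear maps $l_2:V_{-i}\times V_{-j}\to V_{-i-j}$ for $0\le i+j\le 1$, and a trilinear map $l_3:V_0\times V_0\times V_0\to V_{-1}$ such that for all $w,x,y,z\in V_0$, $m,n\in V_{-1}$: (a) $d\,l_2(x,m)=l_2(x,dm)$; (b) $d\,l_2(m,x)=l_2(dm,x)$; (c) $l_2(dm,n)=l_2(m,dn)$; (d) $d\,l_3(x,y,z)=l_2(x,l_2(y,z))-l_2(l_2(x,y),z)-l_2(y,l_2(x,z))$; (e1) $l_3(x,y,dm)=l_2(x,l_2(y,m))-l_2(l_2(x,y),m)-l_2(y,l_2(x,m))$; (e2) $l_3(x,dm,y)=l_2(x,l_2(m,y))-l_2(l_2(x,m),y)-l_2(m,l_2(x,y))$; (e3) $l_3(dm,x,y)=l_2(m,l_2(x,y))-l_2(l_2(m,x),y)-l_2(x,l_2(m,y))$; (f) $l_2(w,l_3(x,y,z))-l_2(x,l_3(w,y,z))+l_2(y,l_3(w,x,z))+l_2(l_3(w,x,y),z)-l_3(l_2(w,x),y,z)-l_3(x,l_2(w,y),z)-l_3(x,y,l_2(w,z))+l_3(w,l_2(x,y),z)+l_3(w,y,l_2(x,z))-l_3(w,x,l_2(y,z))=0$. An $\mathrm{LWX}$ $2$-algebroid $(E_{-1},E_0,\partial,\rho,S,\circ,\Omega)$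 over a manifold $M$ consists of vector bundles $E_{-1},E_0$ over $M$ with $\mathcal E=E_{-1}\oplus E_0$; a nondegenerate symmetric bilinear form $S$ on $\mathcal E$ for which $E_0$ and $E_{-1}$ are both isotropic; an $\mathbb R$-bilinear operation $\circ$ on $\Gamma(\mathcal E)$ mapping $\Gamma(E_{-i})\times\Gamma(E_{-j})\to\Gamma(E_{-(i+j)})$ for $0\le i+j\le 1$ (and zero on $\Gamma(E_{-1})\times\Gamma(E_{-1})$), skew-symmetric on $\Gamma(E_0)\times\Gamma(E_0)$; an $E_{-1}$-valued $3$-form $\Omega$ on $E_0$; bundle maps $\partial:E_{-1}\to E_0$ and $\rho:E_0\to TM$ ($\rho$ is extended by zero to $E_{-1}$); such that: (i) $(\Gamma(E_{-1}),\Gamma(E_0),\partial,\circ,\Omega)$ is a Leibniz $2$-algebra (with $d=\partial$, $l_2=\circ$, $l_3=\Omega$); (ii) $e\circ e=\frac12\mathcal D S(e,e)$ for all $e\in\Gamma(\mathcal E)$, where $\mathcal D:C^\infty(M)\to\Gamma(E_{-1})$ is defined by $S(\mathcal D f,e^0)=\rho(e^0)(f)$ for all $e^0\in\Gamma(E_0)$; (iii) $S(\partial e^1_1,e^1_2)=S(e^1_1,\partial e^1_2)$ for $e^1_1,e^1_2\in\Gamma(E_{-1})$; (iv) $\rho(e_1)S(e_2,e_3)=S(e_1\circ e_2,e_3)+S(e_2,e_1\circ e_3)$ for all $e_1,e_2,e_3\in\Gamma(\mathcal E)$; (v) $S(\Omega(e^0_1,e^0_2,e^0_3),e^0_4)=-S(e^0_3,\Omega(e^0_1,e^0_2,e^0_4))$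 for all $e^0_i\in\Gamma(E_0)$. Notation: $[\![e_1,e_2]\!]=\frac12(e_1\circ e_2-e_2\circ e_1)$ for $e_1,e_2\in\Gamma(\mathcal E)$, and $J(e_1,e_2,e_3)=[\![[\![e_1,e_2]\!],e_3]\!]+[\![[\![e_2,e_3]\!],e_1]\!]+[\![[\![e_3,e_1]\!],e_2]\!]$. *)

theory Defs
  imports "HOL-Analysis.Product_Vector"
begin

definition bilin :: "('a::real_vector \<Rightarrow> 'b::real_vector \<Rightarrow> 'c::real_vector) \<Rightarrow> bool" where
  "bilin f \<longleftrightarrow> (\<forall>x. linear (f x)) \<and> (\<forall>y. linear (\<lambda>x. f x y))"

definition trilin ::
  "('a::real_vector \<Rightarrow> 'b::real_vector \<Rightarrow> 'c::real_vector \<Rightarrow> 'd::real_vector) \<Rightarrow> bool" where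
  "trilin f \<longleftrightarrow> (\<forall>x y. linear (f x y)) \<and> (\<forall>x z. linear (\<lambda>y. f x y z))
                  \<and> (\<forall>y z. linear (\<lambda>x. f x y z))"

text \<open>The bilinear map l_2 is
  given by its three nonzero components:
  l00 : V_0 \<times> V_0 \<rightarrow> V_0,  lxm x m = l_2(x,m) : V_0 \<times> V_{-1} \<rightarrow> V_{-1},
  lmx m x = l_2(m,x) : V_{-1} \<times> V_0 \<rightarrow> V_{-1};  l3 : V_0^3 \<rightarrow> V_{-1}.\<close>

definition leibniz2 ::
  "('a::real_vector \<Rightarrow> 'b::real_vector) \<Rightarrow> ('b \<Rightarrow> 'b \<Rightarrow> 'b) \<Rightarrow> ('b \<Rightarrow> 'a \<Rightarrow> 'a)
   \<Rightarrow> ('a \<Rightarrow> 'b \<Rightarrow> 'a) \<Rightarrow> ('b \<Rightarrow> 'b \<Rightarrow> 'b \<Rightarrow> 'a) \<Rightarrow> bool" where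
  "leibniz2 d l00 lxm lmx l3 \<longleftrightarrow>
     linear d \<and> bilin l00 \<and> bilin lxm \<and> bilin lmx \<and> trilin l3 \<and>
     (\<forall>x m. d (lxm x m) = l00 x (d m)) \<and>
     (\<forall>m x. d (lmx m x) = l00 (d m) x) \<and>
     (\<forall>m n. lxm (d m) n = lmx m (d n)) \<and>
     (\<forall>x y z. d (l3 x y z) = l00 x (l00 y z) - l00 (l00 x y) z - l00 y (l00 x z)) \<and>
     (\<forall>x y m. l3 x y (d m) = lxm x (lxm y m) - lxm (l00 x y) m - lxm y (lxm x m)) \<and>
     (\<forall>x y m. l3 x (d m) y = lxm x (lmx m y) - lmx (lxm x m) y - lmx m (l00 x y)) \<and>
     (\<forall>x y m. l3 (d m) x y = lmx m (l00 x y) - lmx (lmx m x) y - lxm x (lmx m y)) \<and>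
     (\<forall>w x y z.
        lxm w (l3 x y z) - lxm x (l3 w y z) + lxm y (l3 w x z) + lmx (l3 w x y) z
        - l3 (l00 w x) y z - l3 x (l00 w y) z - l3 x y (l00 w z)
        + l3 w (l00 x y) z + l3 w y (l00 x z) - l3 w x (l00 y z) = 0)"

text \<open>Sections of \<E> = E_{-1} \<oplus> E_0 are pairs (m, x).\<close>

definition inj1 :: "'a \<Rightarrow> 'a \<times> 'b::zero" where "inj1 m = (m, 0)"
definition inj0 :: "'b \<Rightarrow> 'a::zero \<times> 'b" where "inj0 x = (0, x)"

text \<open>The full operation \<circ> on \<Gamma>(\<E>), determined by bilinearity from its components
  (zero on \<Gamma>(E_{-1}) \<times> \<Gamma>(E_{-1})).\<close>
definition circE ::
  "('b \<Rightarrow> 'b \<Rightarrow> 'b) \<Rightarrow> ('b \<Rightarrow> 'a \<Rightarrow> 'a) \<Rightarrow> ('a \<Rightarrow> 'b \<Rightarrow> 'a)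
   \<Rightarrow> 'a::ab_group_add \<times> 'b \<Rightarrow> 'a \<times> 'b \<Rightarrow> 'a \<times> 'b" where
  "circE l00 lxm lmx e1 e2 =
     (lxm (snd e1) (fst e2) + lmx (fst e1) (snd e2), l00 (snd e1) (snd e2))"

definition brE ::
  "('b \<Rightarrow> 'b \<Rightarrow> 'b) \<Rightarrow> ('b \<Rightarrow> 'a \<Rightarrow> 'a) \<Rightarrow> ('a \<Rightarrow> 'b \<Rightarrow> 'a)
   \<Rightarrow> 'a::real_vector \<times> 'b::real_vector \<Rightarrow> 'a \<times> 'b \<Rightarrow> 'a \<times> 'b" where
  "brE l00 lxm lmx e1 e2 =
     scaleR (1/2) (circE l00 lxm lmx e1 e2 - circE l00 lxm lmx e2 e1)"

definition JacE ::
  "('b \<Rightarrow> 'b \<Rightarrow> 'b) \<Rightarrow> ('b \<Rightarrow> 'a \<Rightarrow> 'a) \<Rightarrow> ('a \<Rightarrow> 'b \<Rightarrow> 'a)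
   \<Rightarrow> 'a::real_vector \<times> 'b::real_vector \<Rightarrow> 'a \<times> 'b \<Rightarrow> 'a \<times> 'b \<Rightarrow> 'a \<times> 'b" where
  "JacE l00 lxm lmx e1 e2 e3 =
     brE l00 lxm lmx (brE l00 lxm lmx e1 e2) e3
   + brE l00 lxm lmx (brE l00 lxm lmx e2 e3) e1
   + brE l00 lxm lmx (brE l00 lxm lmx e3 e1) e2"

definition fmE :: "('f \<Rightarrow> 'a \<Rightarrow> 'a) \<Rightarrow> ('f \<Rightarrow> 'b \<Rightarrow> 'b) \<Rightarrow> 'f \<Rightarrow> 'a \<times> 'b \<Rightarrow> 'a \<times> 'b" where
  "fmE fm1 fm0 g e = (fm1 g (fst e), fm0 g (snd e))"

text \<open>LWX 2-algebroid, rendered algebraically: 'f plays the role of C^\<infinity>(M),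
  'a of \<Gamma>(E_{-1}) and 'b of \<Gamma>(E_0) (both C^\<infinity>(M)-modules, via fm1, fm0, whose
  restriction to constants is the real vector space structure).
  Parameters: d = \<partial>, rho = \<rho> (each \<rho>(x) a vector field, i.e. a derivation of 'f),
  S the bilinear form on \<Gamma>(\<E>), l00/lxm/lmx the components of \<circ>, Om = \<Omega>,
  DD = \<D>.\<close>

definition LWX2 ::
  "('f::{comm_ring_1,real_algebra_1} \<Rightarrow> 'a::real_vector \<Rightarrow> 'a) \<Rightarrow> ('f \<Rightarrow> 'b::real_vector \<Rightarrow> 'b)
   \<Rightarrow> ('a \<Rightarrow> 'b) \<Rightarrow> ('b \<Rightarrow> 'f \<Rightarrow> 'f) \<Rightarrow> ('a \<times> 'b \<Rightarrow> 'a \<times> 'b \<Rightarrow> 'f)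
   \<Rightarrow> ('b \<Rightarrow> 'b \<Rightarrow> 'b) \<Rightarrow> ('b \<Rightarrow> 'a \<Rightarrow> 'a) \<Rightarrow> ('a \<Rightarrow> 'b \<Rightarrow> 'a)
   \<Rightarrow> ('b \<Rightarrow> 'b \<Rightarrow> 'b \<Rightarrow> 'a) \<Rightarrow> ('f \<Rightarrow> 'a) \<Rightarrow> bool" where
  "LWX2 fm1 fm0 d rho S l00 lxm lmx Om DD \<longleftrightarrow>
     \<comment> \<open>sections form C^\<infinity>(M)-modules compatible with the real structure\<close>
     module fm1 \<and> module fm0 \<and>
     (\<forall>r m. fm1 (of_real r) m = scaleR r m) \<and> (\<forall>r x. fm0 (of_real r) x = scaleR r x) \<and>
     \<comment> \<open>\<partial> is a bundle map\<close>
     (\<forall>m n. d (m + n) = d m + d n) \<and> (\<forall>g m. d (fm1 g m) = fm0 g (d m)) \<and>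
     \<comment> \<open>\<rho> is a bundle map E_0 \<rightarrow> TM: C^\<infinity>-linear with values in derivations\<close>
     (\<forall>x y h. rho (x + y) h = rho x h + rho y h) \<and>
     (\<forall>g x h. rho (fm0 g x) h = g * rho x h) \<and>
     (\<forall>x. linear (rho x)) \<and>
     (\<forall>x g h. rho x (g * h) = g * rho x h + rho x g * h) \<and>
     \<comment> \<open>S: symmetric, C^\<infinity>-bilinear, nondegenerate, E_0 and E_{-1} isotropic\<close>
     (\<forall>e1 e2. S e1 e2 = S e2 e1) \<and>
     (\<forall>e1 e2 e3. S (e1 + e2) e3 = S e1 e3 + S e2 e3) \<and>
     (\<forall>g e1 e2. S (fmE fm1 fm0 g e1) e2 = g * S e1 e2) \<and>
     (\<forall>e. (\<forall>e'. S e e' = 0) \<longrightarrow> e = 0) \<and>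
     (\<forall>m n. S (inj1 m) (inj1 n) = 0) \<and> (\<forall>x y. S (inj0 x) (inj0 y) = 0) \<and>
     \<comment> \<open>\<circ> is skew-symmetric on \<Gamma>(E_0)\<close>
     (\<forall>x y. l00 x y = - l00 y x) \<and>
     \<comment> \<open>\<Omega> is an E_{-1}-valued 3-form on E_0: C^\<infinity>-trilinear and alternating\<close>
     (\<forall>x1 x2 x3 y. Om (x1 + y) x2 x3 = Om x1 x2 x3 + Om y x2 x3) \<and>
     (\<forall>g x1 x2 x3. Om (fm0 g x1) x2 x3 = fm1 g (Om x1 x2 x3)) \<and>
     (\<forall>x1 x2 x3. Om x1 x2 x3 = - Om x2 x1 x3) \<and>
     (\<forall>x1 x2 x3. Om x1 x2 x3 = - Om x1 x3 x2) \<and>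
     \<comment> \<open>definition of \<D>\<close>
     (\<forall>f x. S (inj1 (DD f)) (inj0 x) = rho x f) \<and>
     \<comment> \<open>(i)\<close>
     leibniz2 d l00 lxm lmx Om \<and>
     \<comment> \<open>(ii)\<close>
     (\<forall>e. circE l00 lxm lmx e e = scaleR (1/2) (inj1 (DD (S e e)))) \<and>
     \<comment> \<open>(iii)\<close>
     (\<forall>m1 m2. S (inj0 (d m1)) (inj1 m2) = S (inj1 m1) (inj0 (d m2))) \<and>
     \<comment> \<open>(iv), with \<rho> extended by zero to E_{-1}\<close>
     (\<forall>e1 e2 e3. rho (snd e1) (S e2 e3)
        = S (circE l00 lxm lmx e1 e2) e3 + S e2 (circE l00 lxm lmx e1 e3)) \<and>
     \<comment> \<open>(v)\<close>
     (\<forall>x1 x2 x3 x4. S (inj1 (Om x1 x2 x3)) (inj0 x4) = - S (inj0 x3) (inj1 (Om x1 x2 x4)))"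

end

theory Submission
  imports Defs
begin

locale lwxL =
  fixes fm1 :: "'f::{comm_ring_1,real_algebra_1} \<Rightarrow> 'a::real_vector \<Rightarrow> 'a"
    and fm0 :: "'f \<Rightarrow> 'b::real_vector \<Rightarrow> 'b"
    and d :: "'a \<Rightarrow> 'b" and rho :: "'b \<Rightarrow> 'f \<Rightarrow> 'f"
    and S :: "'a \<times> 'b \<Rightarrow> 'a \<times> 'b \<Rightarrow> 'f"
    and l00 :: "'b \<Rightarrow> 'b \<Rightarrow> 'b" and lxm :: "'b \<Rightarrow> 'a \<Rightarrow> 'a" and lmx :: "'a \<Rightarrow> 'b \<Rightarrow> 'a"
    and Om :: "'b \<Rightarrow> 'b \<Rightarrow> 'b \<Rightarrow> 'a" and DD :: "'f \<Rightarrow> 'a"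
  assumes lwx: "LWX2 fm1 fm0 d rho S l00 lxm lmx Om DD"
begin

lemma fm1r: "fm1 (of_real r) m = scaleR r m" using lwx unfolding LWX2_def by meson
lemma fm0r: "fm0 (of_real r) x = scaleR r x" using lwx unfolding LWX2_def by meson
lemma rho_add: "rho (x + y) h = rho x h + rho y h" using lwx unfolding LWX2_def by meson
lemma rho_fm: "rho (fm0 g x) h = g * rho x h" using lwx unfolding LWX2_def by meson
lemma rho_lin: "linear (rho x)" using lwx unfolding LWX2_def by meson
lemma S_sym: "S e1 e2 = S e2 e1" using lwx unfolding LWX2_def by meson
lemma S_add: "S (e1 + e2) e3 = S e1 e3 + S e2 e3" using lwx unfolding LWX2_def by meson
lemma S_fm: "S (fmE fm1 fm0 g e1) e2 = g * S e1 e2" using lwx unfolding LWX2_def by meson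
lemma nondeg: "(\<And>e'. S e e' = 0) \<Longrightarrow> e = 0" using lwx unfolding LWX2_def by meson
lemma S11: "S (inj1 m) (inj1 n) = 0" using lwx unfolding LWX2_def by meson
lemma S00: "S (inj0 x) (inj0 y) = 0" using lwx unfolding LWX2_def by meson
lemma l00_skew: "l00 x y = - l00 y x" using lwx unfolding LWX2_def by meson
lemma Om_sw1: "Om x1 x2 x3 = - Om x2 x1 x3" using lwx unfolding LWX2_def by meson
lemma Om_sw2: "Om x1 x2 x3 = - Om x1 x3 x2" using lwx unfolding LWX2_def by meson
lemma DD_def: "S (inj1 (DD f)) (inj0 x) = rho x f" using lwx unfolding LWX2_def by meson
lemma leib: "leibniz2 d l00 lxm lmx Om" using lwx unfolding LWX2_def by meson
lemma circ_diag: "circE l00 lxm lmx e e = scaleR (1/2) (inj1 (DD (S e e)))" using lwx unfolding LWX2_def by meson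
lemma ax_iii: "S (inj0 (d m1)) (inj1 m2) = S (inj1 m1) (inj0 (d m2))" using lwx unfolding LWX2_def by meson
lemma ax_iv: "rho (snd e1) (S e2 e3) = S (circE l00 lxm lmx e1 e2) e3 + S e2 (circE l00 lxm lmx e1 e3)"
  using lwx unfolding LWX2_def by meson
lemma ax_v: "S (inj1 (Om x1 x2 x3)) (inj0 x4) = - S (inj0 x3) (inj1 (Om x1 x2 x4))"
  using lwx unfolding LWX2_def by meson

lemma lin_l00a: "linear (l00 x)" using leib unfolding leibniz2_def bilin_def by meson
lemma lin_l00b: "linear (\<lambda>x. l00 x y)" using leib unfolding leibniz2_def bilin_def by meson
lemma lin_lxma: "linear (lxm x)" using leib unfolding leibniz2_def bilin_def by meson
lemma lin_lxmb: "linear (\<lambda>x. lxm x y)" using leib unfolding leibniz2_def bilin_def by meson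
lemma lin_lmxa: "linear (lmx x)" using leib unfolding leibniz2_def bilin_def by meson
lemma lin_lmxb: "linear (\<lambda>x. lmx x y)" using leib unfolding leibniz2_def bilin_def by meson
lemma lin_d: "linear d" using leib unfolding leibniz2_def by meson
lemma ax_d: "d (Om x y z) = l00 x (l00 y z) - l00 (l00 x y) z - l00 y (l00 x z)"
  using leib unfolding leibniz2_def by meson
lemma ax_e1: "Om x y (d m) = lxm x (lxm y m) - lxm (l00 x y) m - lxm y (lxm x m)"
  using leib unfolding leibniz2_def by meson
lemma ax_f: "lxm w (Om x y z) - lxm x (Om w y z) + lxm y (Om w x z) + lmx (Om w x y) z
        - Om (l00 w x) y z - Om x (l00 w y) z - Om x y (l00 w z)
        + Om w (l00 x y) z + Om w y (l00 x z) - Om w x (l00 y z) = 0"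
  using leib unfolding leibniz2_def by meson

lemma zeros: "l00 0 x = 0" "l00 x 0 = 0" "lxm 0 m = 0" "lxm x 0 = 0" "lmx 0 x = 0" "lmx m 0 = 0"
  using linear_0[OF lin_l00a] linear_0[OF lin_l00b] linear_0[OF lin_lxma] linear_0[OF lin_lxmb]
    linear_0[OF lin_lmxa] linear_0[OF lin_lmxb] by auto

lemma S_scale: "S (scaleR r e1) e2 = scaleR r (S e1 e2)"
proof -
  have "fmE fm1 fm0 (of_real r) e1 = scaleR r e1"
    by (cases e1) (simp add: fmE_def fm1r fm0r)
  then show ?thesis using S_fm[of "of_real r" e1 e2] by (simp add: scaleR_conv_of_real)
qed

lemma S_lin1: "linear (\<lambda>e. S e e2)" by (rule linearI) (simp_all add: S_add S_scale)
lemma S_lin2: "linear (\<lambda>e. S e1 e)" by (rule linearI) (simp_all add: S_sym[of e1] S_add S_scale)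

definition T where "T n z = S (inj1 n) (inj0 z)"

lemma inj1_lin: "linear (inj1 :: 'a \<Rightarrow> 'a \<times> 'b)" by (rule linearI) (simp_all add: inj1_def)
lemma inj0_lin: "linear (inj0 :: 'b \<Rightarrow> 'a \<times> 'b)" by (rule linearI) (simp_all add: inj0_def)

lemma T_lin1: "linear (\<lambda>n. T n z)" unfolding T_def
  using linear_compose[OF inj1_lin S_lin1] by (simp add: o_def)
lemma T_lin2: "linear (\<lambda>z. T n z)" unfolding T_def
  using linear_compose[OF inj0_lin S_lin2] by (simp add: o_def)

lemma rho_scale: "rho (scaleR r x) h = scaleR r (rho x h)"
  using rho_fm[of "of_real r" x h] by (simp add: fm0r scaleR_conv_of_real)
lemma rho_lin2: "linear (\<lambda>x. rho x h)" by (rule linearI) (simp_all add: rho_add rho_scale)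

lemma pair_dec: "(n::'a, x::'b) = inj1 n + inj0 x" by (simp add: inj1_def inj0_def)

lemma S_inj1_pair: "S (inj1 k) (n, x) = T k x"
proof -
  have "S (inj1 k) (n, x) = S (inj1 n + inj0 x) (inj1 k)" by (simp add: pair_dec S_sym)
  also have "\<dots> = S (inj1 n) (inj1 k) + S (inj0 x) (inj1 k)" by (rule S_add)
  also have "\<dots> = T k x" by (simp add: S11 T_def S_sym[of "inj0 x"])
  finally show ?thesis .
qed

lemma inj1_zero: "(\<And>x. T k x = 0) \<Longrightarrow> k = 0"
proof -
  assume h: "\<And>x. T k x = 0"
  have "inj1 k = (0::'a\<times>'b)"
  proof (rule nondeg)
    fix e' :: "'a \<times> 'b"
    show "S (inj1 k) e' = 0" using h by (cases e') (simp add: S_inj1_pair)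
  qed
  then show "k = 0" by (simp add: inj1_def zero_prod_def)
qed

lemma T_DD: "T (DD f) x = rho x f" by (simp add: T_def DD_def)

lemma DD_lin: "linear DD"
proof (rule linearI)
  fix a b
  show "DD (a + b) = DD a + DD b"
  proof -
    have "DD (a + b) - (DD a + DD b) = 0"
      apply (rule inj1_zero)
      by (simp add: linear_diff[OF T_lin1] linear_add[OF T_lin1] T_DD linear_add[OF rho_lin])
    then show ?thesis by simp
  qed
next
  fix r a
  show "DD (r *\<^sub>R a) = r *\<^sub>R DD a"
  proof -
    have "DD (r *\<^sub>R a) - r *\<^sub>R DD a = 0"
      apply (rule inj1_zero)
      by (simp add: linear_diff[OF T_lin1] linear_scale[OF T_lin1] T_DD linear_scale[OF rho_lin])
    then show ?thesis by simp
  qed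
qed

lemma S_pair_self: "S (n, x) (n, x) = T n x + T n x"
proof -
  have "S (n, x) (n, x) = S (inj1 n) (n, x) + S (inj0 x) (n, x)" by (simp add: pair_dec[of n x] S_add)
  also have "S (inj0 x) (n, x) = S (n, x) (inj0 x)" by (rule S_sym)
  also have "\<dots> = S (inj1 n) (inj0 x) + S (inj0 x) (inj0 x)" by (simp add: pair_dec[of n x] S_add)
  finally show ?thesis by (simp add: S_inj1_pair S00 T_def)
qed

lemma lxm_lmx: "lxm x n + lmx n x = DD (T n x)"
proof -
  have "circE l00 lxm lmx (n, x) (n, x) = scaleR (1/2) (inj1 (DD (S (n, x) (n, x))))" by (rule circ_diag)
  then have "lxm x n + lmx n x = scaleR (1/2) (DD (T n x + T n x))"
    by (simp add: circE_def inj1_def S_pair_self del: mult_2)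
  also have "\<dots> = scaleR (1/2) (DD (T n x)) + scaleR (1/2) (DD (T n x))"
    by (simp only: linear_add[OF DD_lin] scaleR_add_right)
  also have "\<dots> = DD (T n x)" by (simp only: scaleR_add_left[symmetric]) simp

  finally show ?thesis .
qed

lemma lmx_eq: "lmx n x = DD (T n x) - lxm x n" using lxm_lmx[of x n] by (simp add: algebra_simps)

lemma rhoT: "rho y (T n z) = T (lxm y n) z + T n (l00 y z)"
proof -
  have "rho (snd (inj0 y :: 'a \<times> 'b)) (S (inj1 n) (inj0 z))
     = S (circE l00 lxm lmx (inj0 y) (inj1 n)) (inj0 z) + S (inj1 n) (circE l00 lxm lmx (inj0 y) (inj0 z))"
    by (rule ax_iv)
  moreover have "circE l00 lxm lmx (inj0 y) (inj1 n) = inj1 (lxm y n)"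
    by (simp add: circE_def inj0_def inj1_def zeros)
  moreover have "circE l00 lxm lmx (inj0 y) (inj1 n) = inj1 (lxm y n)"
    by (simp add: circE_def inj0_def inj1_def zeros)
  moreover have "circE l00 lxm lmx (inj0 y) (inj0 z) = inj0 (l00 y z)"
    by (simp add: circE_def inj0_def inj1_def zeros)
  ultimately show ?thesis by (simp add: T_def inj0_def)
qed

lemma T_lxm: "T (lxm y n) z = rho y (T n z) - T n (l00 y z)" using rhoT by simp

definition p where "p n x = scaleR (1/2) (lmx n x - lxm x n)"

lemma p_alt: "p n x = scaleR (1/2) (DD (T n x)) - lxm x n"
proof -
  have "p n x = scaleR (1/2) (DD (T n x) - lxm x n - lxm x n)" by (simp add: p_def lmx_eq)
  also have "\<dots> = scaleR (1/2) (DD (T n x)) - (scaleR (1/2) (lxm x n) + scaleR (1/2) (lxm x n))"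
    by (simp add: algebra_simps)
  also have "scaleR (1/2) (lxm x n) + scaleR (1/2) (lxm x n) = lxm x n"
    by (simp only: scaleR_add_left[symmetric]) simp
  finally show ?thesis .
qed

lemma Tp: "T (p n b) c = scaleR (1/2) (rho c (T n b)) - rho b (T n c) + T n (l00 b c)"
  by (simp add: p_alt linear_diff[OF T_lin1] linear_scale[OF T_lin1] T_DD T_lxm)

lemma p_lin1: "linear (\<lambda>n. p n x)"
  unfolding p_def by (rule linearI) (simp_all add: linear_add[OF lin_lmxb] linear_add[OF lin_lxma]
     linear_scale[OF lin_lmxb] linear_scale[OF lin_lxma] algebra_simps)

lemma br10: "brE l00 lxm lmx (inj1 n) (inj0 x) = inj1 (p n x)"
  by (simp add: brE_def circE_def inj0_def inj1_def zeros p_def)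
lemma br01: "brE l00 lxm lmx (inj0 x) (inj1 n) = inj1 (- p n x)"
  by (simp add: brE_def circE_def inj0_def inj1_def zeros p_def algebra_simps)
lemma br00: "brE l00 lxm lmx (inj0 x) (inj0 y) = inj0 (l00 x y)"
proof -
  have "brE l00 lxm lmx (inj0 x) (inj0 y) = inj0 (scaleR (1/2) (l00 x y + l00 x y))"
    by (simp add: brE_def circE_def inj0_def inj1_def zeros l00_skew[of y x] del: mult_2)
  also have "scaleR (1/2) (l00 x y + l00 x y) = l00 x y"
    by (simp only: scaleR_add_right scaleR_add_left[symmetric]) simp
  finally show ?thesis .
qed

lemma T_Om: "T (Om a b c) e = - T (Om a b e) c"
  using ax_v[of a b c e] by (simp add: T_def S_sym[of "inj0 c"])
lemma T_d: "T m2 (d m1) = T m1 (d m2)"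
  using ax_iii[of m1 m2] by (simp add: T_def S_sym[of "inj0 (d m1)"])

lemma comm: "rho x (rho y (T n z)) - rho y (rho x (T n z)) = rho (l00 x y) (T n z)"
proof -
  have A: "rho x (rho y (T n z)) = T (lxm x (lxm y n)) z + T (lxm y n) (l00 x z)
            + (T (lxm x n) (l00 y z) + T n (l00 x (l00 y z)))"
    by (simp add: rhoT linear_add[OF rho_lin])
  have B: "rho y (rho x (T n z)) = T (lxm y (lxm x n)) z + T (lxm x n) (l00 y z)
            + (T (lxm y n) (l00 x z) + T n (l00 y (l00 x z)))"
    by (simp add: rhoT linear_add[OF rho_lin])
  have C: "rho (l00 x y) (T n z) = T (lxm (l00 x y) n) z + T n (l00 (l00 x y) z)" by (rule rhoT)
  have D: "T (Om x y (d n)) z + T n (d (Om x y z)) = 0"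
    by (simp add: T_d[of n] T_Om[of x y z])
  have E: "T (Om x y (d n)) z + T n (d (Om x y z)) =
     (T (lxm x (lxm y n)) z - T (lxm (l00 x y) n) z - T (lxm y (lxm x n)) z)
     + (T n (l00 x (l00 y z)) - T n (l00 (l00 x y) z) - T n (l00 y (l00 x z)))"
    by (simp add: ax_e1 ax_d linear_diff[OF T_lin1] linear_diff[OF T_lin2])
  show ?thesis using A B C D E by (simp add: algebra_simps)
qed

lemma part1_a:
  "Om (l00 x1 x2) x3 x4 - Om (l00 x1 x3) x2 x4 + Om (l00 x1 x4) x2 x3 + Om (l00 x2 x3) x1 x4
   - Om (l00 x2 x4) x1 x3 + Om (l00 x3 x4) x1 x2
   - p (Om x1 x2 x3) x4 - p (Om x1 x3 x4) x2 + p (Om x1 x2 x4) x3 + p (Om x2 x3 x4) x1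
   + DD (T (Om x1 x2 x3) x4) = 0"
proof -
  define \<sigma> where "\<sigma> = T (Om x1 x2 x3) x4"
  define H where "H = scaleR (1/2) (DD \<sigma>)"
  have HH: "DD \<sigma> = H + H" unfolding H_def by (simp only: scaleR_add_left[symmetric]) simp
  have h1: "T (Om x1 x3 x4) x2 = \<sigma>"
    unfolding \<sigma>_def by (simp add: T_Om[of x1 x3 x4] Om_sw2[of x1 x3 x2] linear_neg[OF T_lin1])
  have h2: "T (Om x1 x2 x4) x3 = - \<sigma>"
    unfolding \<sigma>_def by (simp add: T_Om[of x1 x2 x4])
  have h3: "T (Om x2 x3 x4) x1 = - \<sigma>"
    unfolding \<sigma>_def by (simp add: T_Om[of x2 x3 x4] Om_sw2[of x2 x3 x1] Om_sw1[of x2 x1 x3] linear_neg[OF T_lin1])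
  have Dn: "DD (- \<sigma>) = - DD \<sigma>" by (rule linear_neg[OF DD_lin])
  have f: "lxm x1 (Om x2 x3 x4) - lxm x2 (Om x1 x3 x4) + lxm x3 (Om x1 x2 x4) + lmx (Om x1 x2 x3) x4
        - Om (l00 x1 x2) x3 x4 - Om x2 (l00 x1 x3) x4 - Om x2 x3 (l00 x1 x4)
        + Om x1 (l00 x2 x3) x4 + Om x1 x3 (l00 x2 x4) - Om x1 x2 (l00 x3 x4) = 0"
    by (rule ax_f)
  have o1: "Om x2 (l00 x1 x3) x4 = - Om (l00 x1 x3) x2 x4" by (rule Om_sw1)
  have o2: "Om x2 x3 (l00 x1 x4) = Om (l00 x1 x4) x2 x3"
    by (simp add: Om_sw2[of x2 x3] Om_sw1[of x2 "l00 x1 x4"])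
  have o3: "Om x1 (l00 x2 x3) x4 = - Om (l00 x2 x3) x1 x4" by (rule Om_sw1)
  have o4: "Om x1 x3 (l00 x2 x4) = Om (l00 x2 x4) x1 x3"
    by (simp add: Om_sw2[of x1 x3] Om_sw1[of x1 "l00 x2 x4"])
  have o5: "Om x1 x2 (l00 x3 x4) = Om (l00 x3 x4) x1 x2"
    by (simp add: Om_sw2[of x1 x2] Om_sw1[of x1 "l00 x3 x4"])
  have lm: "lmx (Om x1 x2 x3) x4 = DD \<sigma> - lxm x4 (Om x1 x2 x3)" unfolding \<sigma>_def by (rule lmx_eq)
  have f2: "lxm x1 (Om x2 x3 x4) - lxm x2 (Om x1 x3 x4) + lxm x3 (Om x1 x2 x4) + (H + H - lxm x4 (Om x1 x2 x3))
        - Om (l00 x1 x2) x3 x4 + Om (l00 x1 x3) x2 x4 - Om (l00 x1 x4) x2 x3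
        - Om (l00 x2 x3) x1 x4 + Om (l00 x2 x4) x1 x3 - Om (l00 x3 x4) x1 x2 = 0"
    using f unfolding o1 o2 o3 o4 o5 lm HH by (simp add: algebra_simps)
  show ?thesis
    unfolding p_alt h1 h2 h3 Dn \<sigma>_def[symmetric] scaleR_minus_right H_def[symmetric]
    unfolding HH
    using f2 by (simp add: algebra_simps)
qed

lemma inj1_add: "inj1 u + inj1 v = (inj1 (u + v) :: 'a \<times> 'b)" by (simp add: inj1_def)
lemma J_val: "JacE l00 lxm lmx (inj1 m) (inj0 a) (inj0 b)
   = inj1 (p (p m a) b - p m (l00 a b) - p (p m b) a)"
  unfolding JacE_def br10 br01 br00 br10 by (simp add: linear_neg[OF p_lin1] inj1_def)

lemma part2_raw:
  "2 * (T (p (p m a) b - p m (l00 a b) - p (p m b) a) c - T (p (p m a) c - p m (l00 a c) - p (p m c) a) b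
        + T (p (p m b) c - p m (l00 b c) - p (p m c) b) a + 3 * T (Om (d m) a b) c)
   + (T (p m a) (l00 b c) - T (p m b) (l00 a c) + T (p m c) (l00 a b))
   = - T (Om (d m) a b) c"
proof -
  have cm: "rho x (rho y X) = rho y (rho x X) + rho (l00 x y) X" if "X = T m z" for x y z X
    using comm[of x y m z] that by (simp add: algebra_simps)
  have c1: "rho b (rho a X) = rho a (rho b X) + rho (l00 b a) X" if "X = T m z" for z X using cm that by blast
  have c2: "rho c (rho a X) = rho a (rho c X) + rho (l00 c a) X" if "X = T m z" for z X using cm that by blast
  have c3: "rho c (rho b X) = rho b (rho c X) + rho (l00 c b) X" if "X = T m z" for z X using cm that by blast
  have sk: "l00 b a = - l00 a b" "l00 c a = - l00 a c" "l00 c b = - l00 b c"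
    "l00 c (l00 a b) = - l00 (l00 a b) c" "l00 (l00 b c) a = - l00 a (l00 b c)"
    "l00 (l00 a c) b = - l00 b (l00 a c)" by (rule l00_skew)+
  have ng: "rho (- u) X = - rho u X" "T m (- v) = - T m v" "l00 (- v) w = - l00 v w" "l00 w (- v) = - l00 w v" for u X v w
    by (simp_all add: linear_neg[OF rho_lin2] linear_neg[OF T_lin2] linear_neg[OF lin_l00a] linear_neg[OF lin_l00b])
  have jac: "T m (l00 a (l00 b c)) = T m (d (Om a b c)) + T m (l00 (l00 a b) c) + T m (l00 b (l00 a c))"
    by (simp add: ax_d linear_diff[OF T_lin2])
  have om: "T m (d (Om a b c)) = - T (Om (d m) a b) c"
    by (simp add: T_d[of m] T_Om[of a b c] Om_sw1[of a "d m"] Om_sw2[of a b "d m"] Om_sw1[of b "d m"]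
        linear_neg[OF T_lin1])
  define h where "h = (of_real (1/2) :: 'f)"
  have hh: "h + h = 1" unfolding h_def by (simp flip: of_real_add)
  have h2: "h * (2 * X) = X" for X
  proof -
    have "h * (2 * X) = (h + h) * X" by (simp add: algebra_simps mult_2)
    then show ?thesis using hh by simp
  qed
  have h4: "h * (4 * X) = 2 * X" for X
    using h2[of "2 * X"] by (simp add: mult.assoc[symmetric])
  show ?thesis
    apply (simp add: linear_diff[OF T_lin1] linear_add[OF T_lin1] Tp linear_add[OF rho_lin]
     linear_diff[OF rho_lin] linear_scale[OF rho_lin])
    apply (simp add: c1 c2 c3 linear_add[OF rho_lin] linear_neg[OF rho_lin] sk ng jac om)
    apply (simp add: scaleR_conv_of_real h_def[symmetric])
    apply (simp add: algebra_simps h2 h4)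
    done
qed

end
theorem mainTheorem5:
  fixes fm1 :: "'f::{comm_ring_1,real_algebra_1} \<Rightarrow> 'a::real_vector \<Rightarrow> 'a"
    and fm0 :: "'f \<Rightarrow> 'b::real_vector \<Rightarrow> 'b"
    and d :: "'a \<Rightarrow> 'b" and rho :: "'b \<Rightarrow> 'f \<Rightarrow> 'f"
    and S :: "'a \<times> 'b \<Rightarrow> 'a \<times> 'b \<Rightarrow> 'f"
    and l00 :: "'b \<Rightarrow> 'b \<Rightarrow> 'b" and lxm :: "'b \<Rightarrow> 'a \<Rightarrow> 'a" and lmx :: "'a \<Rightarrow> 'b \<Rightarrow> 'a"
    and Om :: "'b \<Rightarrow> 'b \<Rightarrow> 'b \<Rightarrow> 'a" and DD :: "'f \<Rightarrow> 'a"
    and m :: 'a and x1 x2 x3 x4 :: 'b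
  assumes lwx: "LWX2 fm1 fm0 d rho S l00 lxm lmx Om DD"
  defines "br \<equiv> brE l00 lxm lmx" and "J \<equiv> JacE l00 lxm lmx"
  shows
    "inj1 (Om (snd (br (inj0 x1) (inj0 x2))) x3 x4) - inj1 (Om (snd (br (inj0 x1) (inj0 x3))) x2 x4)
     + inj1 (Om (snd (br (inj0 x1) (inj0 x4))) x2 x3) + inj1 (Om (snd (br (inj0 x2) (inj0 x3))) x1 x4)
     - inj1 (Om (snd (br (inj0 x2) (inj0 x4))) x1 x3) + inj1 (Om (snd (br (inj0 x3) (inj0 x4))) x1 x2)
     - br (inj1 (Om x1 x2 x3)) (inj0 x4) - br (inj1 (Om x1 x3 x4)) (inj0 x2)
     + br (inj1 (Om x1 x2 x4)) (inj0 x3) + br (inj1 (Om x2 x3 x4)) (inj0 x1)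
     + inj1 (DD (S (inj1 (Om x1 x2 x3)) (inj0 x4))) = 0
   \<and> 2 * (S (J (inj1 m) (inj0 x2) (inj0 x3)) (inj0 x4) - S (J (inj1 m) (inj0 x2) (inj0 x4)) (inj0 x3)
          + S (J (inj1 m) (inj0 x3) (inj0 x4)) (inj0 x2) + 3 * S (inj1 (Om (d m) x2 x3)) (inj0 x4))
     + (S (br (inj1 m) (inj0 x2)) (br (inj0 x3) (inj0 x4)) - S (br (inj1 m) (inj0 x3)) (br (inj0 x2) (inj0 x4))
          + S (br (inj1 m) (inj0 x4)) (br (inj0 x2) (inj0 x3)))
     = - S (inj1 (Om (d m) x2 x3)) (inj0 x4)"
proof -
  interpret L: lwxL fm1 fm0 d rho S l00 lxm lmx Om DD by unfold_locales (rule lwx)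
  have P1: "inj1 (Om (snd (br (inj0 x1) (inj0 x2))) x3 x4) - inj1 (Om (snd (br (inj0 x1) (inj0 x3))) x2 x4)
     + inj1 (Om (snd (br (inj0 x1) (inj0 x4))) x2 x3) + inj1 (Om (snd (br (inj0 x2) (inj0 x3))) x1 x4)
     - inj1 (Om (snd (br (inj0 x2) (inj0 x4))) x1 x3) + inj1 (Om (snd (br (inj0 x3) (inj0 x4))) x1 x2)
     - br (inj1 (Om x1 x2 x3)) (inj0 x4) - br (inj1 (Om x1 x3 x4)) (inj0 x2)
     + br (inj1 (Om x1 x2 x4)) (inj0 x3) + br (inj1 (Om x2 x3 x4)) (inj0 x1)
     + inj1 (DD (S (inj1 (Om x1 x2 x3)) (inj0 x4))) = (0 :: 'a \<times> 'b)"
    using L.part1_a[of x1 x2 x3 x4]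
    unfolding br_def L.br00 L.br10 L.T_def inj0_def[symmetric]
    by (simp add: inj1_def inj0_def zero_prod_def)
  have P2: "2 * (S (J (inj1 m) (inj0 x2) (inj0 x3)) (inj0 x4) - S (J (inj1 m) (inj0 x2) (inj0 x4)) (inj0 x3)
          + S (J (inj1 m) (inj0 x3) (inj0 x4)) (inj0 x2) + 3 * S (inj1 (Om (d m) x2 x3)) (inj0 x4))
     + (S (br (inj1 m) (inj0 x2)) (br (inj0 x3) (inj0 x4)) - S (br (inj1 m) (inj0 x3)) (br (inj0 x2) (inj0 x4))
          + S (br (inj1 m) (inj0 x4)) (br (inj0 x2) (inj0 x3)))
     = - S (inj1 (Om (d m) x2 x3)) (inj0 x4)"
    using L.part2_raw[of m x2 x3 x4]
    unfolding br_def J_def L.br00 L.br10 L.J_val L.T_def by simp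
  show ?thesis using P1 P2 by blast
qed

end
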